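(* Let $(V,E^+\uplus E^-)$ be a Correlation Clustering instance with optimum cost $\mathrm{opt}$, let $\mathcal C$ be a clustering of $V$ with $\mathrm{obj}(\mathcal C)\le3\,\mathrm{opt}$, and let $\mathcal K$ be the partition of $V$ constructed from $\mathcal C$ as described in the context (with $\beta=0.1$). Let $\mathcal C^*$ be an optimum clustering (i.e. $\mathrm{obj}(\mathcal C^* )=\mathrm{opt}$). Then every atom $K\in\mathcal K$ is contained in a single cluster of $\mathcal C^*$.
   Context: A Correlation Clustering instance consists of a finite vertex set $V$ and a partition $E^+\uplus E^-=\binom V2$ of unordered pairs of distinct vertices into $+$edges and $-$edges. For a clustering (partition) $\mathcal C$ of $V$, $\mathrm{obj}(\mathcal C)$ is the number of $+$edges between different parts plus the number of $-$edges inside parts; $\mathrm{opt}$ is its minimum. By convention every vertex has a $+$ self-loop, so the set $N^+_u$ of $+$neighbours of $u$ contains $u$. $A\triangle B$ denotes symmetric difference. Construction of $\mathcal K$ with $\beta=0.1$: for every non-singleton $C\in\mathcal C$, mark every $u\in C$ with $|N^+_u\triangle C|>\frac\beta2|C|$, and then, if at least $\frac{\beta|C|}{3}$ vertices of $C$ are marked, mark all vertices of $C$. $\mathcal K$ is obtained from $\mathcal C$ by removing every marked vertex from its cluster and making it a singleton cluster. The parts of $\mathcal K$ are called atoms. *)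

theory Defs
  imports Complex_Main "HOL-Library.Disjoint_Sets"
begin

text \<open>A Correlation Clustering instance: finite vertex set V and the set Epos of +edges,
  each an unordered pair (2-element subset) of V. All other pairs of distinct vertices are -edges.\<close>

definition cc_instance :: "'a set \<Rightarrow> 'a set set \<Rightarrow> bool" where
  "cc_instance V Epos \<longleftrightarrow> finite V \<and> (\<forall>e\<in>Epos. e \<subseteq> V \<and> card e = 2)"

definition pairs :: "'a set \<Rightarrow> 'a set set" where
  "pairs V = {e. e \<subseteq> V \<and> card e = 2}"

abbreviation clustering :: "'a set \<Rightarrow> 'a set set \<Rightarrow> bool" where
  "clustering V C \<equiv> partition_on V C"

definition obj :: "'a set \<Rightarrow> 'a set set \<Rightarrow> 'a set set \<Rightarrow> nat" where
  "obj V Epos C =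
     card {e \<in> pairs V. e \<in> Epos \<and> \<not> (\<exists>X\<in>C. e \<subseteq> X)}
   + card {e \<in> pairs V. e \<notin> Epos \<and> (\<exists>X\<in>C. e \<subseteq> X)}"

definition opt :: "'a set \<Rightarrow> 'a set set \<Rightarrow> nat" where
  "opt V Epos = Min (obj V Epos ` {C. clustering V C})"

definition Npos :: "'a set \<Rightarrow> 'a set set \<Rightarrow> 'a \<Rightarrow> 'a set" where
  "Npos V Epos u = {v \<in> V. v = u \<or> {u, v} \<in> Epos}"

definition beta :: real where "beta = 1/10"

definition premarked :: "'a set \<Rightarrow> 'a set set \<Rightarrow> 'a set \<Rightarrow> 'a set" where
  "premarked V Epos Cl = {u \<in> Cl. real (card (sym_diff (Npos V Epos u) Cl)) > beta / 2 * real (card Cl)}"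

definition marked_in :: "'a set \<Rightarrow> 'a set set \<Rightarrow> 'a set \<Rightarrow> 'a set" where
  "marked_in V Epos Cl =
     (if card Cl \<le> 1 then {}
      else if real (card (premarked V Epos Cl)) \<ge> beta * real (card Cl) / 3 then Cl
      else premarked V Epos Cl)"

definition marked :: "'a set \<Rightarrow> 'a set set \<Rightarrow> 'a set set \<Rightarrow> 'a set" where
  "marked V Epos C = (\<Union>Cl\<in>C. marked_in V Epos Cl)"

definition atoms :: "'a set \<Rightarrow> 'a set set \<Rightarrow> 'a set set \<Rightarrow> 'a set set" where
  "atoms V Epos C =
     {Cl - marked V Epos C | Cl. Cl \<in> C \<and> Cl - marked V Epos C \<noteq> {}}
   \<union> {{u} | u. u \<in> marked V Epos C}"

end

theory Submission imports Defs begin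

definition samec :: "'a set set \<Rightarrow> 'a \<Rightarrow> 'a \<Rightarrow> bool" where
  "samec C u v = (\<exists>X\<in>C. u \<in> X \<and> v \<in> X)"

definition badp :: "'a set set \<Rightarrow> 'a set set \<Rightarrow> 'a \<Rightarrow> 'a \<Rightarrow> bool" where
  "badp Epos C u v = (u \<noteq> v \<and> (({u,v} \<in> Epos) = (\<not> samec C u v)))"

lemma pairs_double:
  assumes "finite V"
  shows "2 * card {e \<in> pairs V. Q e} = card {(u,v). u \<in> V \<and> v \<in> V \<and> u \<noteq> v \<and> Q {u,v}}"
proof -
  let ?E = "{e \<in> pairs V. Q e}"
  let ?F = "\<lambda>e. {(u,v). u \<noteq> v \<and> {u,v} = e}"
  have fin: "finite ?E" using assms unfolding pairs_def by (auto intro: finite_subset[of _ "Pow V"])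
  have eq: "{(u,v). u \<in> V \<and> v \<in> V \<and> u \<noteq> v \<and> Q {u,v}} = (\<Union>e\<in>?E. ?F e)"
    unfolding pairs_def by auto
  have c2: "card (?F e) = 2" if "e \<in> ?E" for e
  proof -
    from that have "card e = 2" unfolding pairs_def by auto
    then obtain a b where ab: "e = {a,b}" "a \<noteq> b" by (meson card_2_iff)
    have "?F e = {(a,b),(b,a)}" using ab by (auto simp: doubleton_eq_iff)
    then show ?thesis using ab by simp
  qed
  have finF: "finite (?F e)" if "e \<in> ?E" for e
    using c2[OF that] card.infinite by fastforce
  have "card (\<Union>e\<in>?E. ?F e) = (\<Sum>e\<in>?E. card (?F e))"
    by (rule card_UN_disjoint[OF fin]) (use finF in auto)
  also have "\<dots> = (\<Sum>e\<in>?E. 2)" using c2 by simp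
  finally show ?thesis using eq by simp
qed

lemma obj_sum:
  assumes "finite V"
  shows "2 * real (obj V Epos C) = (\<Sum>u\<in>V. \<Sum>v\<in>V. of_bool (badp Epos C u v))"
proof -
  let ?Q = "\<lambda>e. (e \<in> Epos \<and> \<not> (\<exists>X\<in>C. e \<subseteq> X)) \<or> (e \<notin> Epos \<and> (\<exists>X\<in>C. e \<subseteq> X))"
  have finP: "finite (pairs V)" using assms unfolding pairs_def by (auto intro: finite_subset[of _ "Pow V"])
  have "obj V Epos C = card {e \<in> pairs V. ?Q e}"
    unfolding obj_def
    by (subst card_Un_disjoint[symmetric]) (use finP in \<open>auto intro: arg_cong[where f=card]\<close>)
  then have "2 * obj V Epos C = card {(u,v). u \<in> V \<and> v \<in> V \<and> u \<noteq> v \<and> ?Q {u,v}}"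
    using pairs_double[OF assms] by simp
  also have "{(u,v). u \<in> V \<and> v \<in> V \<and> u \<noteq> v \<and> ?Q {u,v}} = (SIGMA u:V. {v \<in> V. badp Epos C u v})"
    unfolding badp_def samec_def by auto
  also have "card \<dots> = (\<Sum>u\<in>V. card {v \<in> V. badp Epos C u v})"
    using assms by (simp add: card_SigmaI)
  finally have "real (2 * obj V Epos C) = real (\<Sum>u\<in>V. card {v \<in> V. badp Epos C u v})" by simp
  then show ?thesis using assms by (simp add: Int_def)
qed


lemma badp_sym: "badp Epos C u v = badp Epos C v u"
  unfolding badp_def samec_def by (auto simp: insert_commute)

definition move :: "'a set set \<Rightarrow> 'a set \<Rightarrow> 'a set \<Rightarrow> 'a set set" where
  "move C S Y = {X - S | X. X \<in> C \<and> X \<noteq> Y \<and> X - S \<noteq> {}} \<union> {S \<union> Y}"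

lemma part_uniq:
  assumes "partition_on V C" "X \<in> C" "Z \<in> C" "u \<in> X" "u \<in> Z"
  shows "X = Z"
  using assms unfolding partition_on_def disjoint_def by blast

lemma move_partition:
  assumes "partition_on V C" "S \<subseteq> V" "S \<noteq> {}" "Y \<in> C \<or> Y = {}"
  shows "partition_on V (move C S Y)"
proof (rule partition_onI)
  have U: "\<Union>C = V" using assms(1) partition_onD1 by blast
  show "\<Union>(move C S Y) = V"
  proof
    show "\<Union>(move C S Y) \<subseteq> V" using U assms(2,4) unfolding move_def by auto
    show "V \<subseteq> \<Union>(move C S Y)"
    proof
      fix x assume "x \<in> V"
      then obtain X where X: "X \<in> C" "x \<in> X" using U by blast
      show "x \<in> \<Union>(move C S Y)"
      proof (cases "x \<in> S \<or> X = Y")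
        case True then show ?thesis using X unfolding move_def by auto
      next
        case False then have "X - S \<in> move C S Y" using X unfolding move_def by auto
        then show ?thesis using X False by blast
      qed
    qed
  qed
  show "{} \<notin> move C S Y" using assms(3) unfolding move_def by auto
  fix p q assume pq: "p \<in> move C S Y" "q \<in> move C S Y" "p \<noteq> q"
  have dis: "X \<inter> Z = {}" if "X \<in> C" "Z \<in> C" "X \<noteq> Z" for X Z
    using part_uniq[OF assms(1)] that by blast
  show "disjnt p q"
    using pq assms(4) dis unfolding move_def disjnt_def by (auto; blast)
qed

lemma move_same:
  assumes "partition_on V C" "S \<subseteq> V" "S \<noteq> {}" "Y \<in> C \<or> Y = {}" "u \<in> V" "v \<in> V"
  shows "samec (move C S Y) u v = (if u \<in> S \<or> v \<in> S then u \<in> S \<union> Y \<and> v \<in> S \<union> Y else samec C u v)"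
proof (cases "u \<in> S \<or> v \<in> S")
  case True
  then show ?thesis unfolding samec_def move_def by auto
next
  case False
  have U: "\<Union>C = V" using assms(1) partition_onD1 by blast
  show ?thesis
  proof
    assume "samec (move C S Y) u v"
    then show "(if u \<in> S \<or> v \<in> S then u \<in> S \<union> Y \<and> v \<in> S \<union> Y else samec C u v)"
      using False assms(4) unfolding samec_def move_def by auto
  next
    assume "(if u \<in> S \<or> v \<in> S then u \<in> S \<union> Y \<and> v \<in> S \<union> Y else samec C u v)"
    then obtain X where X: "X \<in> C" "u \<in> X" "v \<in> X" using False unfolding samec_def by auto
    show "samec (move C S Y) u v"
    proof (cases "X = Y")
      case True then show ?thesis using X unfolding samec_def move_def by auto
    next
      case F2: False
      then have "X - S \<in> move C S Y" using X False unfolding move_def by auto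
      then show ?thesis using X False unfolding samec_def by blast
    qed
  qed
qed

lemma sym_split:
  fixes d :: "'a \<Rightarrow> 'a \<Rightarrow> real"
  assumes "finite V" "S \<subseteq> V" "\<And>u v. u \<in> V \<Longrightarrow> v \<in> V \<Longrightarrow> d u v = d v u"
    "\<And>u v. u \<in> V - S \<Longrightarrow> v \<in> V - S \<Longrightarrow> d u v = 0"
    "0 \<le> (\<Sum>u\<in>V. \<Sum>v\<in>V. d u v)"
  shows "0 \<le> (\<Sum>u\<in>S. (\<Sum>v\<in>S. d u v) + 2 * (\<Sum>v\<in>V-S. d u v))"
proof -
  have fS: "finite S" and fD: "finite (V - S)" using assms(1,2) finite_subset by auto
  have VS: "V = S \<union> (V - S)" using assms(2) by auto
  have sp: "(\<Sum>v\<in>V. f v) = (\<Sum>v\<in>S. f v) + (\<Sum>v\<in>V-S. f v)" for f :: "'a \<Rightarrow> real"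
    by (subst VS) (rule sum.union_disjoint[OF fS fD], auto)
  have z: "(\<Sum>u\<in>V-S. \<Sum>v\<in>V-S. d u v) = 0" using assms(4) by simp
  have sw: "(\<Sum>u\<in>V-S. \<Sum>v\<in>S. d u v) = (\<Sum>u\<in>S. \<Sum>v\<in>V-S. d u v)"
  proof -
    have "(\<Sum>u\<in>V-S. \<Sum>v\<in>S. d u v) = (\<Sum>v\<in>S. \<Sum>u\<in>V-S. d u v)" by (rule sum.swap)
    also have "\<dots> = (\<Sum>v\<in>S. \<Sum>u\<in>V-S. d v u)"
      using assms(2,3) by (intro sum.cong refl) auto
    finally show ?thesis .
  qed
  have "(\<Sum>u\<in>V. \<Sum>v\<in>V. d u v) = (\<Sum>u\<in>S. \<Sum>v\<in>V. d u v) + (\<Sum>u\<in>V-S. \<Sum>v\<in>V. d u v)"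
    by (rule sp)
  also have "\<dots> = (\<Sum>u\<in>S. (\<Sum>v\<in>S. d u v) + (\<Sum>v\<in>V-S. d u v)) + (\<Sum>u\<in>V-S. (\<Sum>v\<in>S. d u v) + (\<Sum>v\<in>V-S. d u v))"
    by (simp only: sp)
  also have "\<dots> = (\<Sum>u\<in>S. (\<Sum>v\<in>S. d u v) + 2 * (\<Sum>v\<in>V-S. d u v))"
    using z sw by (simp add: sum.distrib sum_distrib_left)
  finally show ?thesis using assms(5) by simp
qed

lemma local_opt:
  assumes "finite V" "partition_on V Cs" "\<And>C'. partition_on V C' \<Longrightarrow> obj V Epos Cs \<le> obj V Epos C'"
    "S \<subseteq> V" "S \<noteq> {}" "Y \<in> Cs \<or> Y = {}"
  shows "(0::real) \<le> (\<Sum>u\<in>S. (\<Sum>v\<in>S. of_bool (u \<noteq> v \<and> ({u,v} \<in> Epos) = (v \<notin> S \<union> Y)) - of_bool (badp Epos Cs u v))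
     + 2 * (\<Sum>v\<in>V-S. of_bool (u \<noteq> v \<and> ({u,v} \<in> Epos) = (v \<notin> S \<union> Y)) - of_bool (badp Epos Cs u v)))"
proof -
  let ?M = "move Cs S Y"
  define d where "d u v = (of_bool (badp Epos ?M u v) - of_bool (badp Epos Cs u v) :: real)" for u v
  have P: "partition_on V ?M" using move_partition assms by blast
  have "obj V Epos Cs \<le> obj V Epos ?M" using assms(3)[OF P] .
  then have "2 * real (obj V Epos Cs) \<le> 2 * real (obj V Epos ?M)" by simp
  then have "(\<Sum>u\<in>V. \<Sum>v\<in>V. of_bool (badp Epos Cs u v)) \<le> (\<Sum>u\<in>V. \<Sum>v\<in>V. (of_bool (badp Epos ?M u v)::real))"
    unfolding obj_sum[OF assms(1)] .
  then have "0 \<le> (\<Sum>u\<in>V. \<Sum>v\<in>V. d u v)" unfolding d_def by (simp add: sum_subtractf)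
  moreover have "d u v = d v u" for u v
    unfolding d_def by (simp only: badp_sym[of Epos "move Cs S Y" u v] badp_sym[of Epos Cs u v])
  moreover have "d u v = 0" if "u \<in> V - S" "v \<in> V - S" for u v
    using move_same[OF assms(2,4,5,6), of u v] that unfolding d_def badp_def by auto
  ultimately have "0 \<le> (\<Sum>u\<in>S. (\<Sum>v\<in>S. d u v) + 2 * (\<Sum>v\<in>V-S. d u v))"
    using sym_split[OF assms(1,4)] by blast
  also have "\<dots> = (\<Sum>u\<in>S. (\<Sum>v\<in>S. of_bool (u \<noteq> v \<and> ({u,v} \<in> Epos) = (v \<notin> S \<union> Y)) - of_bool (badp Epos Cs u v))
     + 2 * (\<Sum>v\<in>V-S. of_bool (u \<noteq> v \<and> ({u,v} \<in> Epos) = (v \<notin> S \<union> Y)) - of_bool (badp Epos Cs u v)))"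
  proof (intro sum.cong refl arg_cong2[where f="(+)"] arg_cong2[where f="(*)"])
    fix u v assume "u \<in> S" "v \<in> S"
    then show "d u v = of_bool (u \<noteq> v \<and> ({u,v} \<in> Epos) = (v \<notin> S \<union> Y)) - of_bool (badp Epos Cs u v)"
      using move_same[OF assms(2,4,5,6), of u v] assms(4) unfolding d_def badp_def by auto
  next
    fix u v assume "u \<in> S" "v \<in> V - S"
    then show "d u v = of_bool (u \<noteq> v \<and> ({u,v} \<in> Epos) = (v \<notin> S \<union> Y)) - of_bool (badp Epos Cs u v)"
      using move_same[OF assms(2,4,5,6), of u v] assms(4) unfolding d_def badp_def by auto
  qed
  finally show ?thesis .
qed


lemma sob: "finite A \<Longrightarrow> (\<Sum>x\<in>A. (of_bool (Q x)::real)) = real (card {x\<in>A. Q x})"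
  by (simp add: Int_def conj_commute)

declare sum_of_bool_eq[simp del]

lemma same_iff:
  assumes "partition_on V Cs" "X \<in> Cs" "u \<in> X"
  shows "samec Cs u v \<longleftrightarrow> v \<in> X"
  using part_uniq[OF assms(1) assms(2)] assms unfolding samec_def by blast

lemma core:
  fixes V :: "'a set" and Cs :: "'a set set"
  assumes fin: "finite V" and Cs: "partition_on V Cs"
    and optC: "\<And>C'. partition_on V C' \<Longrightarrow> obj V Epos Cs \<le> obj V Epos C'"
    and ClV: "Cl \<subseteq> V" and PCl: "P \<subseteq> Cl" and Pb: "real (card P) < real (card Cl) / 30"
    and good: "\<And>u. u \<in> Cl - P \<Longrightarrow> real (card (Cl - Npos V Epos u)) + real (card (Npos V Epos u - Cl)) \<le> real (card Cl) / 20"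
    and Kne: "Cl - P \<noteq> {}"
  shows "\<exists>X\<in>Cs. Cl - P \<subseteq> X"
proof -
  define K where "K = Cl - P"
  define N where "N = Npos V Epos"
  define n where "n = real (card Cl)"
  define dl where "dl = real (card P)"
  have finCl: "finite Cl" using fin ClV finite_subset by blast
  have finP: "finite P" using finCl PCl finite_subset by blast
  have KV: "K \<subseteq> V" using ClV K_def by auto
  have finK: "finite K" using finCl K_def by auto
  have Kne': "K \<noteq> {}" using Kne K_def by simp
  have cardK: "real (card K) = n - dl"
    unfolding K_def n_def dl_def using card_Diff_subset[OF finP PCl] card_mono[OF finCl PCl] by simp
  have NV: "N u \<subseteq> V" for u unfolding N_def Npos_def by auto
  have finN: "finite (N u)" for u using NV fin finite_subset by blast
  have Nchar: "v \<in> N u \<longleftrightarrow> {u,v} \<in> Epos" if "v \<in> V" "v \<noteq> u" for u v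
    using that unfolding N_def Npos_def by auto
  have uN: "u \<in> N u" if "u \<in> V" for u using that unfolding N_def Npos_def by auto
  have cov: "\<Union>Cs = V" using Cs partition_onD1 by blast
  have suu: "samec Cs u u" if "u \<in> V" for u using that cov unfolding samec_def by blast
  have goodK: "real (card (Cl - N u)) + real (card (N u - Cl)) \<le> n / 20" if "u \<in> K" for u
    using good that unfolding K_def N_def n_def by blast
  have "Cl \<noteq> {}" using Kne by blast
  then have "card Cl > 0" using finCl by (simp add: card_gt_0_iff)
  then have npos: "n > 0" unfolding n_def by simp
  have dl0: "dl \<ge> 0" unfolding dl_def by simp
  have dlb: "dl < n / 30" using Pb unfolding dl_def n_def .
  have outK: "card {v\<in>W. v \<in> N u \<and> v \<notin> K} \<le> card (N u - Cl) + card P" for u W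
  proof -
    have "card {v\<in>W. v \<in> N u \<and> v \<notin> K} \<le> card ((N u - Cl) \<union> P)"
      by (rule card_mono) (use finN finP K_def in auto)
    also have "\<dots> \<le> card (N u - Cl) + card P" by (rule card_Un_le)
    finally show ?thesis .
  qed
  have inCl: "card {v\<in>W. v \<in> Cl - N u} \<le> card (Cl - N u)" for u W
    by (rule card_mono) (use finCl in auto)

  have step1: "\<exists>u1\<in>K. real (card {v\<in>K. \<not> samec Cs u1 v}) \<le> n/10 + 2*dl"
  proof (rule ccontr)
    assume "\<not> ?thesis"
    then have big: "\<And>u. u \<in> K \<Longrightarrow> n/10 + 2*dl < real (card {v\<in>K. \<not> samec Cs u v})" by auto
    let ?d = "\<lambda>u v. (of_bool (u \<noteq> v \<and> ({u,v} \<in> Epos) = (v \<notin> K \<union> {})) - of_bool (badp Epos Cs u v) :: real)"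
    have lo: "0 \<le> (\<Sum>u\<in>K. (\<Sum>v\<in>K. ?d u v) + 2 * (\<Sum>v\<in>V-K. ?d u v))"
      using local_opt[OF fin Cs optC KV Kne', of "{}"] by simp
    have per: "(\<Sum>v\<in>K. ?d u v) + 2 * (\<Sum>v\<in>V-K. ?d u v) < 0" if u: "u \<in> K" for u
    proof -
      have uV: "u \<in> V" using u KV by auto
      have "(\<Sum>v\<in>K. ?d u v) \<le> (\<Sum>v\<in>K. 2 * of_bool (v \<in> Cl - N u) - of_bool (\<not> samec Cs u v))"
      proof (rule sum_mono)
        fix v assume v: "v \<in> K"
        then have vV: "v \<in> V" "v \<in> Cl" using KV K_def by auto
        show "?d u v \<le> 2 * of_bool (v \<in> Cl - N u) - of_bool (\<not> samec Cs u v)"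
        proof (cases "v = u")
          case True then show ?thesis using suu[OF uV] uN[OF uV] by (simp add: badp_def)
        next
          case False
          then show ?thesis using Nchar[OF vV(1) False] vV v by (auto simp: badp_def)
        qed
      qed
      also have "\<dots> = 2 * real (card {v\<in>K. v \<in> Cl - N u}) - real (card {v\<in>K. \<not> samec Cs u v})"
        using finK by (simp add: sum_subtractf sum_distrib_left[symmetric] sob)
      finally have s1: "(\<Sum>v\<in>K. ?d u v) \<le> 2 * real (card (Cl - N u)) - real (card {v\<in>K. \<not> samec Cs u v})"
        using inCl[of K u] by linarith
      have "(\<Sum>v\<in>V-K. ?d u v) \<le> (\<Sum>v\<in>V-K. of_bool (v \<in> N u \<and> v \<notin> K))"
      proof (rule sum_mono)
        fix v assume v: "v \<in> V - K"
        then have "v \<noteq> u" using u by auto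
        then show "?d u v \<le> of_bool (v \<in> N u \<and> v \<notin> K)"
          using Nchar[of v u] v by (auto simp: badp_def)
      qed
      also have "\<dots> = real (card {v\<in>V-K. v \<in> N u \<and> v \<notin> K})" by (rule sob) (use fin in simp)
      finally have s2: "(\<Sum>v\<in>V-K. ?d u v) \<le> real (card (N u - Cl)) + dl"
        using outK[of "V-K" u] unfolding dl_def by linarith
      show ?thesis using s1 s2 goodK[OF u] big[OF u] by linarith
    qed
    have "(\<Sum>u\<in>K. (\<Sum>v\<in>K. ?d u v) + 2 * (\<Sum>v\<in>V-K. ?d u v)) < (\<Sum>u\<in>K. 0)"
      by (rule sum_strict_mono[OF finK Kne' per])
    then show False using lo by simp
  qed
  then obtain u1 where u1: "u1 \<in> K" "real (card {v\<in>K. \<not> samec Cs u1 v}) \<le> n/10 + 2*dl" by blast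
  then obtain X where X: "X \<in> Cs" "u1 \<in> X" using cov KV by blast
  have XV: "X \<subseteq> V" using X cov by blast
  have finX: "finite X" using XV fin finite_subset by blast
  define A where "A = K \<inter> X"
  define R where "R = X - K"
  define B where "B = K - X"
  have AV: "A \<subseteq> V" using KV A_def by auto
  have Ane: "A \<noteq> {}" using u1 X A_def by auto
  have finA: "finite A" using finK A_def by auto
  have finR: "finite R" using finX R_def by auto
  have finB: "finite B" using finK B_def by auto
  have sameX: "samec Cs u v \<longleftrightarrow> v \<in> X" if "u \<in> X" for u v using same_iff[OF Cs X(1) that] .
  have nsameX: "\<not> samec Cs u v" if "u \<notin> X" "v \<in> X" for u v
    using sameX[OF that(2), of u] that badp_sym unfolding samec_def by blast

  have Rb: "real (card R) \<le> n/10 + 2*dl"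
  proof -
    let ?d = "\<lambda>u v. (of_bool (u \<noteq> v \<and> ({u,v} \<in> Epos) = (v \<notin> A \<union> {})) - of_bool (badp Epos Cs u v) :: real)"
    have lo: "0 \<le> (\<Sum>u\<in>A. (\<Sum>v\<in>A. ?d u v) + 2 * (\<Sum>v\<in>V-A. ?d u v))"
      using local_opt[OF fin Cs optC AV Ane, of "{}"] by simp
    have per: "(\<Sum>v\<in>A. ?d u v) + 2 * (\<Sum>v\<in>V-A. ?d u v) \<le> n/5 + 4*dl - 2 * real (card R)" if u: "u \<in> A" for u
    proof -
      have uX: "u \<in> X" and uK: "u \<in> K" using u A_def by auto
      have "(\<Sum>v\<in>A. ?d u v) \<le> (\<Sum>v\<in>A. 0)"
      proof (rule sum_mono)
        fix v assume v: "v \<in> A"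
        then have "samec Cs u v" using sameX[OF uX] A_def by auto
        then show "?d u v \<le> 0" using v by (auto simp: badp_def)
      qed
      then have s1: "(\<Sum>v\<in>A. ?d u v) \<le> 0" by simp
      have "(\<Sum>v\<in>V-A. ?d u v) \<le> (\<Sum>v\<in>V-A. 2 * of_bool (v \<in> N u \<and> v \<notin> K \<and> v \<in> R) - of_bool (v \<in> R))"
      proof (rule sum_mono)
        fix v assume v: "v \<in> V - A"
        then have vu: "v \<noteq> u" using u by auto
        show "?d u v \<le> 2 * of_bool (v \<in> N u \<and> v \<notin> K \<and> v \<in> R) - of_bool (v \<in> R)"
        proof (cases "v \<in> X")
          case True
          have f: "samec Cs u v" "v \<in> R" "v \<notin> K" using True v sameX[OF uX] unfolding R_def A_def by auto
          show ?thesis using Nchar[of v u] v vu f by (cases "{u,v} \<in> Epos") (simp_all add: badp_def)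
        next
          case False
          have f: "\<not> samec Cs u v" "v \<notin> R" "v \<notin> A" using False v sameX[OF uX] unfolding R_def A_def by auto
          show ?thesis using f by (cases "{u,v} \<in> Epos") (simp_all add: badp_def)
        qed
      qed
      also have "\<dots> = 2 * real (card {v\<in>V-A. v \<in> N u \<and> v \<notin> K \<and> v \<in> R}) - real (card {v\<in>V-A. v \<in> R})"
        using fin by (simp add: sum_subtractf sum_distrib_left[symmetric] sob)
      finally have s2': "(\<Sum>v\<in>V-A. ?d u v) \<le> 2 * real (card {v\<in>V-A. v \<in> N u \<and> v \<notin> K \<and> v \<in> R}) - real (card {v\<in>V-A. v \<in> R})" .
      have e1: "{v\<in>V-A. v \<in> R} = R" using XV unfolding R_def A_def by auto
      have e2: "card {v\<in>V-A. v \<in> N u \<and> v \<notin> K \<and> v \<in> R} \<le> card {v\<in>V-A. v \<in> N u \<and> v \<notin> K}"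
        by (rule card_mono) (use fin in auto)
      have s2: "(\<Sum>v\<in>V-A. ?d u v) \<le> 2 * (real (card (N u - Cl)) + dl) - real (card R)"
        using s2' e1 e2 outK[of "V-A" u] unfolding dl_def by simp
      have c0: "real (card (Cl - N u)) \<ge> 0" by simp
      have gen: "\<And>x y. x \<le> 0 \<Longrightarrow> y \<le> 2 * (real (card (N u - Cl)) + dl) - real (card R) \<Longrightarrow> x + 2 * y \<le> n/5 + 4*dl - 2 * real (card R)"
        using c0 goodK[OF uK] by argo
      show ?thesis by (rule gen[OF s1 s2])
    qed
    have "(\<Sum>u\<in>A. (\<Sum>v\<in>A. ?d u v) + 2 * (\<Sum>v\<in>V-A. ?d u v)) \<le> (\<Sum>u\<in>A. n/5 + 4*dl - 2 * real (card R))"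
      by (rule sum_mono) (rule per)
    then have "0 \<le> (\<Sum>u\<in>A. n/5 + 4*dl - 2 * real (card R))"
      using lo by linarith
    then have "0 \<le> real (card A) * (n/5 + 4*dl - 2 * real (card R))" by simp
    moreover have "real (card A) > 0" using finA Ane by (simp add: card_gt_0_iff)
    ultimately have "0 \<le> n/5 + 4*dl - 2 * real (card R)"
      by (simp add: zero_le_mult_iff)
    then show ?thesis by linarith
  qed

  show ?thesis
  proof (cases "B = {}")
    case True
    then have "K \<subseteq> X" unfolding B_def by auto
    then show ?thesis using X K_def by blast
  next
    case Bne: False
    have BV: "B \<subseteq> V" using KV B_def by auto
    have cardAB: "card A + card B = card K"
    proof -
      have "A \<union> B = K" "A \<inter> B = {}" unfolding A_def B_def by auto
      then show ?thesis using card_Un_disjoint[OF finA finB] by simp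
    qed
    have Bb: "card B \<le> card {v\<in>K. \<not> samec Cs u1 v}"
      by (rule card_mono) (use finK sameX[OF X(2)] B_def in auto)
    let ?d = "\<lambda>u v. (of_bool (u \<noteq> v \<and> ({u,v} \<in> Epos) = (v \<notin> B \<union> X)) - of_bool (badp Epos Cs u v) :: real)"
    have lo: "0 \<le> (\<Sum>u\<in>B. (\<Sum>v\<in>B. ?d u v) + 2 * (\<Sum>v\<in>V-B. ?d u v))"
      using local_opt[OF fin Cs optC BV Bne, of X] X(1) by simp
    have per: "(\<Sum>v\<in>B. ?d u v) + 2 * (\<Sum>v\<in>V-B. ?d u v) < 0" if u: "u \<in> B" for u
    proof -
      have uX: "u \<notin> X" and uK: "u \<in> K" and uV: "u \<in> V" using u B_def KV by auto
      have "(\<Sum>v\<in>B. ?d u v) \<le> (\<Sum>v\<in>B. of_bool (v \<in> Cl - N u))"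
      proof (rule sum_mono)
        fix v assume v: "v \<in> B"
        then have vV: "v \<in> V" "v \<in> Cl" using BV B_def K_def by auto
        show "?d u v \<le> of_bool (v \<in> Cl - N u)"
        proof (cases "v = u")
          case True then show ?thesis using suu[OF uV] uN[OF uV] by (simp add: badp_def)
        next
          case False
          then show ?thesis using Nchar[OF vV(1) False] vV v by (auto simp: badp_def)
        qed
      qed
      also have "\<dots> = real (card {v\<in>B. v \<in> Cl - N u})" using finB by (simp add: sob)
      finally have s1: "(\<Sum>v\<in>B. ?d u v) \<le> real (card (Cl - N u))"
        using inCl[of B u] by linarith
      have "(\<Sum>v\<in>V-B. ?d u v) \<le> (\<Sum>v\<in>V-B. 2 * of_bool (v \<in> Cl - N u \<and> v \<in> A) + of_bool (v \<in> R)
              + of_bool (v \<in> N u \<and> v \<notin> K) - of_bool (v \<in> A))"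
      proof (rule sum_mono)
        fix v assume v: "v \<in> V - B"
        show "?d u v \<le> 2 * of_bool (v \<in> Cl - N u \<and> v \<in> A) + of_bool (v \<in> R)
              + of_bool (v \<in> N u \<and> v \<notin> K) - of_bool (v \<in> A)"
        proof (cases "v \<in> X")
          case True
          then have vu: "v \<noteq> u" using uX by auto
          have ns: "\<not> samec Cs u v" using nsameX[OF uX True] .
          show ?thesis
          proof (cases "v \<in> K")
            case True2: True
            have f: "v \<in> A" "v \<notin> R" "v \<in> Cl" "v \<in> V" using True True2 v K_def unfolding A_def R_def by auto
            show ?thesis using Nchar[of v u] f vu ns True by (cases "{u,v} \<in> Epos") (simp_all add: badp_def)
          next
            case False2: False
            have f: "v \<notin> A" "v \<in> R" "v \<in> V" using True False2 v unfolding A_def R_def by auto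
            show ?thesis using Nchar[of v u] f vu ns True by (cases "{u,v} \<in> Epos") (simp_all add: badp_def)
          qed
        next
          case False
          then have vK: "v \<notin> K" using v B_def by auto
          show ?thesis
          proof (cases "v = u")
            case True then show ?thesis using vK uK by simp
          next
            case vu: False
            have f: "v \<notin> A" "v \<notin> R" "v \<notin> B" "v \<in> V" using False vK v unfolding A_def R_def by auto
            show ?thesis using Nchar[of v u] f vu False vK by (cases "{u,v} \<in> Epos") (simp_all add: badp_def)
          qed
        qed
      qed
      also have "\<dots> = 2 * real (card {v\<in>V-B. v \<in> Cl - N u \<and> v \<in> A}) + real (card {v\<in>V-B. v \<in> R})
              + real (card {v\<in>V-B. v \<in> N u \<and> v \<notin> K}) - real (card {v\<in>V-B. v \<in> A})"
        using fin by (simp add: sum_subtractf sum.distrib sum_distrib_left[symmetric] sob)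
      finally have s2': "(\<Sum>v\<in>V-B. ?d u v) \<le> 2 * real (card {v\<in>V-B. v \<in> Cl - N u \<and> v \<in> A}) + real (card {v\<in>V-B. v \<in> R})
              + real (card {v\<in>V-B. v \<in> N u \<and> v \<notin> K}) - real (card {v\<in>V-B. v \<in> A})" .
      have e1: "card {v\<in>V-B. v \<in> Cl - N u \<and> v \<in> A} \<le> card (Cl - N u)"
        by (rule card_mono) (use finCl in auto)
      have e2: "card {v\<in>V-B. v \<in> R} \<le> card R" by (rule card_mono) (use finR in auto)
      have e3: "{v\<in>V-B. v \<in> A} = A" using AV unfolding A_def B_def by auto
      have s2: "(\<Sum>v\<in>V-B. ?d u v) \<le> 2 * real (card (Cl - N u)) + real (card R)
              + real (card (N u - Cl)) + dl - real (card A)"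
        using s2' e1 e2 e3 outK[of "V-B" u] unfolding dl_def by simp
      have cA: "real (card A) \<ge> n - dl - (n/10 + 2*dl)"
        using cardAB Bb u1(2) cardK by (smt (verit) of_nat_add of_nat_le_iff)
      have c0: "real (card (Cl - N u)) \<ge> 0" "real (card (N u - Cl)) \<ge> 0" by simp_all
      show ?thesis using s1 s2 cA Rb goodK[OF uK] c0 dlb npos dl0 by linarith
    qed
    have "(\<Sum>u\<in>B. (\<Sum>v\<in>B. ?d u v) + 2 * (\<Sum>v\<in>V-B. ?d u v)) < (\<Sum>u\<in>B. 0)"
      by (rule sum_strict_mono[OF finB Bne per])
    then show ?thesis using lo by simp
  qed
qed


lemma marked_in_sub: "marked_in V Epos Cl \<subseteq> Cl"
  unfolding marked_in_def premarked_def by auto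

theorem lemma8:
  fixes V :: "'a set" and Epos :: "'a set set" and C Cstar :: "'a set set"
  assumes "cc_instance V Epos"
    and "clustering V C"
    and "obj V Epos C \<le> 3 * opt V Epos"
    and "clustering V Cstar"
    and "obj V Epos Cstar = opt V Epos"
  shows "\<forall>K \<in> atoms V Epos C. \<exists>X \<in> Cstar. K \<subseteq> X"
proof
  fix K assume K: "K \<in> atoms V Epos C"
  have fin: "finite V" using assms(1) unfolding cc_instance_def by blast
  have finC: "finite {C'. partition_on V C'}"
  proof (rule finite_subset)
    show "{C'. partition_on V C'} \<subseteq> Pow (Pow V)"
      using partition_onD1 by fastforce
    show "finite (Pow (Pow V))" using fin by simp
  qed
  have optC: "obj V Epos Cstar \<le> obj V Epos C'" if "partition_on V C'" for C'
    unfolding assms(5) opt_def by (rule Min_le) (use finC that in auto)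
  have covS: "\<Union>Cstar = V" using assms(4) partition_onD1 by blast
  have covC: "\<Union>C = V" using assms(2) partition_onD1 by blast
  have mV: "marked V Epos C \<subseteq> V"
  proof
    fix x assume "x \<in> marked V Epos C"
    then obtain Cl where Cl: "Cl \<in> C" "x \<in> marked_in V Epos Cl" unfolding marked_def by blast
    have "x \<in> Cl" using subsetD[OF marked_in_sub[of V Epos Cl] Cl(2)] .
    then show "x \<in> V" using covC \<open>Cl \<in> C\<close> by blast
  qed
  from K consider (a) Cl where "K = Cl - marked V Epos C" "Cl \<in> C" "Cl - marked V Epos C \<noteq> {}"
    | (b) u where "K = {u}" "u \<in> marked V Epos C"
    unfolding atoms_def by blast
  then show "\<exists>X \<in> Cstar. K \<subseteq> X"
  proof cases
    case b
    then have "u \<in> V" using mV by blast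
    then obtain X where "X \<in> Cstar" "u \<in> X" using covS by blast
    then show ?thesis using b by blast
  next
    case a
    have ClV: "Cl \<subseteq> V" using a(2) covC by blast
    have finCl: "finite Cl" using fin ClV finite_subset by blast
    have meq: "Cl - marked V Epos C = Cl - marked_in V Epos Cl"
    proof -
      have "marked_in V Epos Cl' \<inter> Cl = {}" if "Cl' \<in> C" "Cl' \<noteq> Cl" for Cl'
        using marked_in_sub[of V Epos Cl'] part_uniq[OF assms(2) that(1) a(2)] that by blast
      then show ?thesis unfolding marked_def using a(2) by blast
    qed
    show ?thesis
    proof (cases "card Cl \<le> 1")
      case True
      then have "K = Cl" using a meq unfolding marked_in_def by simp
      then have "card K \<le> 1" "K \<noteq> {}" using True a by auto
      then obtain x where x: "K = {x}" using finCl \<open>K = Cl\<close>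
        by (metis One_nat_def card_0_eq card_eq_SucD le_SucE le_zero_eq)
      then have "x \<in> V" using \<open>K = Cl\<close> ClV by auto
      then obtain X where "X \<in> Cstar" "x \<in> X" using covS by blast
      then show ?thesis using x by blast
    next
      case False
      let ?P = "premarked V Epos Cl"
      have notall: "\<not> (real (card ?P) \<ge> beta * real (card Cl) / 3)"
      proof
        assume "real (card ?P) \<ge> beta * real (card Cl) / 3"
        then have "marked_in V Epos Cl = Cl" using False unfolding marked_in_def by simp
        then show False using a meq by simp
      qed
      then have mi: "marked_in V Epos Cl = ?P" using False unfolding marked_in_def by simp
      have PCl: "?P \<subseteq> Cl" unfolding premarked_def by auto
      have Pb: "real (card ?P) < real (card Cl) / 30" using notall unfolding beta_def by simp
      have good: "real (card (Cl - Npos V Epos u)) + real (card (Npos V Epos u - Cl)) \<le> real (card Cl) / 20"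
        if u: "u \<in> Cl - ?P" for u
      proof -
        have "\<not> real (card (sym_diff (Npos V Epos u) Cl)) > beta / 2 * real (card Cl)"
          using u unfolding premarked_def by auto
        then have le: "real (card (sym_diff (Npos V Epos u) Cl)) \<le> real (card Cl) / 20"
          unfolding beta_def by simp
        have finN: "finite (Npos V Epos u)" using fin unfolding Npos_def by simp
        have "card (sym_diff (Npos V Epos u) Cl) = card (Npos V Epos u - Cl) + card (Cl - Npos V Epos u)"
          by (rule card_Un_disjoint) (use finN finCl in auto)
        then show ?thesis using le by simp
      qed
      have ne: "Cl - ?P \<noteq> {}" using a meq mi by simp
      obtain X where "X \<in> Cstar" "Cl - ?P \<subseteq> X"
        using core[OF fin assms(4) optC ClV PCl Pb good ne] by blast
      then show ?thesis using a meq mi by auto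
    qed
  qed
qed

end
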